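(* Let $n>k\geq1$, $r=n-k$, and for $i\in[m]$ let $1\leq h_i\leq n-k$ and $k\leq d_i\leq n-h_i$ be integers. Put $\delta_i=\gcd(h_i,d_i-k)$ and $s_i=\frac{d_i-k+\delta_i}{\delta_i}$, with the pairs indexed so that $s_1\leq s_2\leq\cdots\leq s_m$; let $s=\mathrm{lcm}\big(\frac{d_1-k+h_1}{\delta_1},\ldots,\frac{d_m-k+h_m}{\delta_m}\big)$ and $\ell=s\cdot s_m^n$. Let $F$ be a finite field with $|F|\geq s_mn$ and $\lambda_{i,j}$, $i\in[n]$, $j\in[0,s_m-1]$, be $s_mn$ distinct elements of $F$. Let $\mathcal{C}_4$ be the set of all $(\bm c_1,\ldots,\bm c_n)$, $\bm c_i=(c_{i,0},\ldots,c_{i,\ell-1})\in F^\ell$, satisfying $$\sum_{i=1}^n \lambda_{i,a_i}^{t-1} c_{i,(a,b)}=0\quad\text{for all } a\in[0,s_m^n-1],\ b\in[0,s-1],\ t\in[r].$$ Then $\mathcal{C}_4$ is an $(n,k,\ell)$ MDS array code having the $(h_i,d_i)$-optimal repair property for all $i\in[m]$.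
   Context: Notation: $[n]=\{1,\ldots,n\}$, $[i,j]=\{i,\ldots,j\}$. Each $\tau\in[0,\ell-1]$ is written uniquely as $\tau=b\cdot s_m^n+\sum_{i=1}^n a_i s_m^{i-1}$ with $b\in[0,s-1]$, $a_i\in[0,s_m-1]$; we write $a=(a_1,\ldots,a_n)$ and $\tau=(a,b)$, with $c_{i,(a,b)}=c_{i,\tau}$. An $(n,k,\ell)$ MDS array code over $F$ is an $F$-linear set of vectors $(\bm c_1,\ldots,\bm c_n)$, $\bm c_i\in F^\ell$ (node $i$ stores $\bm c_i$), of dimension $k\ell$, such that any $k$ coordinates determine the codeword. The $(h,d)$-optimal repair property means: for every $h$-subset $\mathcal{H}\subseteq[n]$ and every $d$-subset $\mathcal{R}\subseteq[n]\setminus\mathcal{H}$, each helper $j\in\mathcal{R}$ can send $\beta=\frac{h\ell}{d-k+h}$ symbols of $F$ computed from $\bm c_j$ such that from these $\frac{dh\ell}{d-k+h}$ symbols in total all $\bm c_i$, $i\in\mathcal{H}$, are determined, for every codeword (equality in the cut-set bound). *)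

theory Defs
  imports Complex_Main "HOL-Library.Function_Algebras" "HOL-Library.Cardinality"
begin

text \<open>A codeword (c_1,...,c_n), c_i in F^l, is represented as c :: nat => nat => 'a,
  where c i tau = c_{i,tau} for i in {1..n}, tau < l, and c i tau = 0 otherwise.\<close>

definition cw_scale :: "'a::field \<Rightarrow> (nat \<Rightarrow> nat \<Rightarrow> 'a) \<Rightarrow> (nat \<Rightarrow> nat \<Rightarrow> 'a)" where
  "cw_scale x c = (\<lambda>i tau. x * c i tau)"

definition is_MDS_array_code ::
  "nat \<Rightarrow> nat \<Rightarrow> nat \<Rightarrow> (nat \<Rightarrow> nat \<Rightarrow> 'a::field) set \<Rightarrow> bool" where
  "is_MDS_array_code n k l C \<longleftrightarrow>
     (\<forall>c\<in>C. \<forall>i tau. (i \<notin> {1..n} \<or> l \<le> tau) \<longrightarrow> c i tau = 0) \<and>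
     module.subspace cw_scale C \<and>
     vector_space.dim cw_scale C = k * l \<and>
     (\<forall>K. K \<subseteq> {1..n} \<and> card K = k \<longrightarrow>
        (\<forall>c\<in>C. \<forall>c'\<in>C. (\<forall>i\<in>K. c i = c' i) \<longrightarrow> c = c'))"

text \<open>(h,d)-optimal repair property: every helper j in R sends
  beta = h l / (d-k+h) symbols of F computed from c_j (a function f j of c_j),
  and these symbols determine all c_i, i in H, for every codeword.\<close>
definition has_optimal_repair ::
  "nat \<Rightarrow> nat \<Rightarrow> nat \<Rightarrow> (nat \<Rightarrow> nat \<Rightarrow> 'a::field) set \<Rightarrow> nat \<Rightarrow> nat \<Rightarrow> bool" where
  "has_optimal_repair n k l C h d \<longleftrightarrow>
     (d - k + h) dvd (h * l) \<and>
     (\<forall>H R. H \<subseteq> {1..n} \<and> card H = h \<and> R \<subseteq> {1..n} - H \<and> card R = d \<longrightarrow>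
        (\<exists>f :: nat \<Rightarrow> (nat \<Rightarrow> 'a) \<Rightarrow> 'a list.
            (\<forall>j\<in>R. \<forall>v. length (f j v) = h * l div (d - k + h)) \<and>
            (\<forall>c\<in>C. \<forall>c'\<in>C. (\<forall>j\<in>R. f j (c j) = f j (c' j)) \<longrightarrow> (\<forall>i\<in>H. c i = c' i))))"

text \<open>Digit a_i of tau in [0, s_m^n * s - 1]: tau = b s_m^n + sum_i a_i s_m^(i-1).\<close>
definition digit :: "nat \<Rightarrow> nat \<Rightarrow> nat \<Rightarrow> nat" where
  "digit sm i tau = tau div sm ^ (i - 1) mod sm"

end

theory Submission
  imports Defs "HOL-Computational_Algebra.Polynomial" "HOL-Library.FuncSet"
begin
lemma vander_zero:
  fixes Z :: "'a::field set" and W :: "'a \<Rightarrow> 'a"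
  assumes fin: "finite Z" and cardZ: "card Z \<le> r"
    and eq: "\<forall>t<r. (\<Sum>z\<in>Z. z ^ t * W z) = 0" and z0: "z0 \<in> Z"
  shows "W z0 = 0"
proof -
  define Q where "Q = (\<Prod>z\<in>Z - {z0}. [:- z, 1:])"
  have "degree Q \<le> sum (degree \<circ> (\<lambda>z. [:- z, 1:])) (Z - {z0})"
    unfolding Q_def using fin by (intro degree_prod_sum_le) auto
  also have "\<dots> = card (Z - {z0})" by simp
  also have "\<dots> < r" using cardZ z0 fin
    by (metis card_Diff1_less le_trans not_less)
  finally have degQ: "degree Q < r" .
  have "0 = (\<Sum>i\<le>degree Q. coeff Q i * (\<Sum>z\<in>Z. z ^ i * W z))"
    using eq degQ by simp
  also have "\<dots> = (\<Sum>z\<in>Z. (\<Sum>i\<le>degree Q. coeff Q i * z ^ i) * W z)"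
    by (simp add: sum_distrib_left sum_distrib_right mult.assoc) (rule sum.swap)
  also have "\<dots> = (\<Sum>z\<in>Z. poly Q z * W z)" by (simp add: poly_altdef)
  also have "\<dots> = poly Q z0 * W z0 + (\<Sum>z\<in>Z - {z0}. poly Q z * W z)"
    using fin z0 by (simp add: sum.remove)
  also have "(\<Sum>z\<in>Z - {z0}. poly Q z * W z) = 0"
    using fin by (intro sum.neutral) (auto simp: Q_def poly_prod)
  finally have "poly Q z0 * W z0 = 0" by simp
  moreover have "poly Q z0 \<noteq> 0" using fin by (simp add: Q_def poly_prod)
  ultimately show ?thesis by simp
qed

lemma vander_group:
  fixes pt :: "'b \<Rightarrow> 'a::field" and w :: "'b \<Rightarrow> 'a"
  assumes fin: "finite X" and card: "card (pt ` X) \<le> r"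
    and eq: "\<forall>t<r. (\<Sum>x\<in>X. pt x ^ t * w x) = 0"
  shows "(\<Sum>x\<in>{x\<in>X. pt x = z}. w x) = 0"
proof (cases "z \<in> pt ` X")
  case False
  then have "{x\<in>X. pt x = z} = {}" by auto
  then show ?thesis by (metis (no_types) sum.empty)
next
  case True
  define W where "W y = (\<Sum>x\<in>{x\<in>X. pt x = y}. w x)" for y
  have "\<forall>t<r. (\<Sum>y\<in>pt ` X. y ^ t * W y) = 0"
  proof (intro allI impI)
    fix t assume "t < r"
    have "(\<Sum>x\<in>X. pt x ^ t * w x) = (\<Sum>y\<in>pt ` X. \<Sum>x\<in>{x\<in>X. pt x = y}. pt x ^ t * w x)"
      using fin by (rule sum.image_gen)
    also have "\<dots> = (\<Sum>y\<in>pt ` X. y ^ t * W y)"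
      unfolding W_def sum_distrib_left by (intro sum.cong refl) auto
    finally show "(\<Sum>y\<in>pt ` X. y ^ t * W y) = 0" using eq \<open>t < r\<close> by simp
  qed
  then have "W z = 0" using vander_zero[of "pt ` X" r W z] fin card True by auto
  then show ?thesis by (simp add: W_def)
qed

lemma vander_solve:
  fixes pt :: "nat \<Rightarrow> 'a::{field,finite}"
  assumes fin: "finite J" and cJ: "card J = r" and inj: "inj_on pt J"
  shows "\<exists>w. \<forall>t<r. (\<Sum>j\<in>J. pt j ^ t * w j) = y t"
proof -
  define Phi where "Phi w = restrict (\<lambda>t. \<Sum>j\<in>J. pt j ^ t * w j) {..<r}" for w :: "nat \<Rightarrow> 'a"
  define Dom where "Dom = PiE J (\<lambda>_. (UNIV :: 'a set))"
  define Tgt where "Tgt = PiE {..<r} (\<lambda>_. (UNIV :: 'a set))"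
  have injP: "inj_on Phi Dom"
  proof (rule inj_onI)
    fix w1 w2 assume w1: "w1 \<in> Dom" and w2: "w2 \<in> Dom" and e: "Phi w1 = Phi w2"
    have z: "\<forall>t<r. (\<Sum>j\<in>J. pt j ^ t * (w1 j - w2 j)) = 0"
    proof (intro allI impI)
      fix t assume "t < r"
      then have "(\<Sum>j\<in>J. pt j ^ t * w1 j) = (\<Sum>j\<in>J. pt j ^ t * w2 j)"
        using fun_cong[OF e, of t] by (simp add: Phi_def)
      then show "(\<Sum>j\<in>J. pt j ^ t * (w1 j - w2 j)) = 0"
        by (simp add: right_diff_distrib sum_subtractf)
    qed
    show "w1 = w2"
    proof
      fix j show "w1 j = w2 j"
      proof (cases "j \<in> J")
        case True
        have "card (pt ` J) \<le> r" using cJ card_image_le[OF fin] by metis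
        from vander_group[OF fin this z, of "pt j"]
        have "(\<Sum>x\<in>{x\<in>J. pt x = pt j}. w1 x - w2 x) = 0" .
        moreover have "{x\<in>J. pt x = pt j} = {j}" using inj True by (auto dest: inj_onD)
        ultimately show ?thesis by simp
      next
        case False
        then show ?thesis using w1 w2 by (auto simp: Dom_def PiE_def extensional_def)
      qed
    qed
  qed
  have sub: "Phi ` Dom \<subseteq> Tgt" unfolding Phi_def Tgt_def by (intro image_subsetI) (simp add: restrict_PiE_iff)
  have "card (Phi ` Dom) = card Dom" using injP by (rule card_image)
  also have "\<dots> = CARD('a) ^ r" using fin cJ by (simp add: Dom_def card_PiE)
  also have "\<dots> = card Tgt" by (simp add: Tgt_def card_PiE)
  finally have ceq: "card (Phi ` Dom) = card Tgt" .
  have finT: "finite Tgt" unfolding Tgt_def by (intro finite_PiE) auto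
  have img: "Phi ` Dom = Tgt" by (rule card_subset_eq[OF finT sub ceq])
  have "restrict y {..<r} \<in> Tgt" by (simp add: Tgt_def)
  then obtain w where w: "restrict y {..<r} = Phi w" unfolding img[symmetric] by (elim imageE) simp
  show ?thesis
  proof (intro exI[of _ w] allI impI)
    fix t assume t: "t < r"
    have "Phi w t = restrict y {..<r} t" using w by (simp only:)
    then show "(\<Sum>j\<in>J. pt j ^ t * w j) = y t" using t by (simp add: Phi_def)
  qed
qed

lemma digit_lt: "0 < sm \<Longrightarrow> digit sm i t < sm"
  by (simp add: digit_def)

lemma digits_eq_mod:
  "(\<forall>i\<in>{1..n}. digit sm i x = digit sm i y) \<Longrightarrow> x mod sm ^ n = y mod sm ^ n"
proof (induction n)
  case 0 then show ?case by simp
next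
  case (Suc n)
  then have IH: "x mod sm ^ n = y mod sm ^ n" by auto
  have d: "x div sm ^ n mod sm = y div sm ^ n mod sm"
    using Suc.prems by (auto simp: digit_def dest: bspec[of _ _ "Suc n"])
  have "x mod sm ^ Suc n = sm ^ n * (x div sm ^ n mod sm) + x mod sm ^ n"
    using mod_mult2_eq[of x "sm^n" sm] by (simp only: power_Suc2)
  also have "\<dots> = sm ^ n * (y div sm ^ n mod sm) + y mod sm ^ n" using IH d by simp
  also have "\<dots> = y mod sm ^ Suc n" using mod_mult2_eq[of y "sm^n" sm] by (simp only: power_Suc2)
  finally show ?case .
qed

lemma digit_mod:
  assumes "i \<in> {1..n}" shows "digit sm i (x mod sm ^ n) = digit sm i x"
proof (cases "sm = 0")
  case True then show ?thesis using assms by (cases n) auto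
next
  case False
  define b where "b = sm ^ (i - 1)"
  define c where "c = sm ^ (n - i + 1)"
  have n: "sm ^ n = b * c" unfolding b_def c_def
  proof -
    have "n = (i - 1) + (n - i + 1)" using assms by auto
    then show "sm ^ n = sm ^ (i - 1) * sm ^ (n - i + 1)" by (metis power_add)
  qed
  have bpos: "b > 0" using False by (simp add: b_def)
  have "x mod (b * c) div b = x div b mod c"
  proof -
    have "x mod (b * c) = b * (x div b mod c) + x mod b" by (rule mod_mult2_eq)
    then show ?thesis using bpos by simp
  qed
  moreover have "sm dvd c" using assms by (simp add: c_def)
  ultimately show ?thesis unfolding digit_def n b_def[symmetric]
    by (simp add: mod_mod_cancel)
qed

lemma digit_exists:
  assumes "0 < sm"
  shows "(\<forall>i\<in>{1..n}. a i < sm) \<Longrightarrow> \<exists>Y<sm ^ n. \<forall>i\<in>{1..n}. digit sm i Y = a i"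
proof (induction n)
  case 0 then show ?case by simp
next
  case (Suc n)
  then obtain Y where Y: "Y < sm ^ n" "\<forall>i\<in>{1..n}. digit sm i Y = a i" by auto
  have aS: "a (Suc n) < sm" using Suc.prems by auto
  define Y' where "Y' = Y + sm ^ n * a (Suc n)"
  have "Y' < sm ^ n + sm ^ n * a (Suc n)" using Y by (simp add: Y'_def)
  also have "\<dots> = sm ^ n * (a (Suc n) + 1)" by (simp add: algebra_simps)
  also have "\<dots> \<le> sm ^ n * sm" using aS by (intro mult_le_mono2) simp
  finally have lt: "Y' < sm ^ Suc n" by (simp add: mult.commute)
  have m: "Y' mod sm ^ n = Y" using Y by (simp add: Y'_def)
  have dv: "Y' div sm ^ n = a (Suc n)" using Y assms by (simp add: Y'_def)
  have "\<forall>i\<in>{1..Suc n}. digit sm i Y' = a i"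
  proof
    fix i assume i: "i \<in> {1..Suc n}"
    show "digit sm i Y' = a i"
    proof (cases "i = Suc n")
      case True then show ?thesis using dv aS by (simp add: digit_def)
    next
      case False
      then have "i \<in> {1..n}" using i by auto
      then show ?thesis using digit_mod[of i n sm Y'] m Y by simp
    qed
  qed
  then show ?case using lt by blast
qed

definition inC :: "nat \<Rightarrow> nat \<Rightarrow> nat \<Rightarrow> nat \<Rightarrow> (nat \<Rightarrow> nat \<Rightarrow> 'a) \<Rightarrow> (nat \<Rightarrow> nat \<Rightarrow> 'a::field) \<Rightarrow> bool" where
  "inC n r sm l lam c \<longleftrightarrow> (\<forall>i tau. (i \<notin> {1..n} \<or> l \<le> tau) \<longrightarrow> c i tau = 0) \<and>
     (\<forall>tau<l. \<forall>t\<in>{1..r}. (\<Sum>i=1..n. lam i (digit sm i tau) ^ (t - 1) * c i tau) = 0)"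

lemma sum_app2: "(\<Sum>x\<in>A. f x) i t = (\<Sum>x\<in>A. f x i t)"
  by (induct A rule: infinite_finite_induct) auto

lemma vs_cw: "vector_space (cw_scale :: 'a::field \<Rightarrow> _)"
  by unfold_locales (auto simp: cw_scale_def fun_eq_iff algebra_simps)

lemma subspace_inC: "module.subspace cw_scale {c. inC n r sm l lam c}"
proof -
  interpret V: vector_space "cw_scale :: 'a \<Rightarrow> _" by (rule vs_cw)
  show ?thesis
    unfolding V.subspace_def
  proof (intro conjI ballI allI)
    show "0 \<in> {c. inC n r sm l lam c}" by (simp add: inC_def)
  next
    fix x y assume x: "x \<in> {c. inC n r sm l lam c}" and y: "y \<in> {c. inC n r sm l lam c}"
    show "x + y \<in> {c. inC n r sm l lam c}"
      using x y by (simp add: inC_def distrib_left sum.distrib)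
  next
    fix a x assume x: "x \<in> {c. inC n r sm l lam c}"
    have "(\<Sum>i=1..n. lam i (digit sm i tau) ^ (t - 1) * (a * x i tau))
       = a * (\<Sum>i=1..n. lam i (digit sm i tau) ^ (t - 1) * x i tau)" for tau t
      by (simp add: sum_distrib_left mult.left_commute)
    then show "cw_scale a x \<in> {c. inC n r sm l lam c}"
      using x by (simp add: inC_def cw_scale_def)
  qed
qed

lemma inC_diff: "inC n r sm l lam c \<Longrightarrow> inC n r sm l lam c' \<Longrightarrow> inC n r sm l lam (c - c')"
  by (simp add: inC_def right_diff_distrib sum_subtractf)

lemma lam_inj:
  fixes lam :: "nat \<Rightarrow> nat \<Rightarrow> 'a" and u v :: nat
  assumes "inj_on (\<lambda>(i, j). lam i j) ({1..n} \<times> {0..<sm})"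
    "x \<in> {1..n}" "i \<in> {1..n}" "u < sm" "v < sm" "lam x u = lam i v"
  shows "x = i \<and> u = v"
proof -
  have "(x,u) = (i,v)" by (rule inj_onD[OF assms(1)]) (use assms in auto)
  then show ?thesis by simp
qed

lemma inC_uniq:
  assumes C: "inC n r sm l lam e" and sm: "0 < sm"
    and inj: "inj_on (\<lambda>(i, j). lam i j) ({1..n} \<times> {0..<sm})"
    and K: "K \<subseteq> {1..n}" "card K = k" and r: "r = n - k"
    and z: "\<forall>i\<in>K. \<forall>tau. e i tau = 0"
  shows "e i tau = 0"
proof (cases "i \<in> {1..n} - K \<and> tau < l")
  case False
  then show ?thesis using C z unfolding inC_def by (metis DiffI not_le)
next
  case True
  define X where "X = {1..n} - K"
  define pt where "pt j = lam j (digit sm j tau)" for j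
  have finX: "finite X" by (simp add: X_def)
  have cX: "card X = r" using K r by (simp add: X_def card_Diff_subset finite_subset)
  have "card (pt ` X) \<le> r" using card_image_le[OF finX, of pt] cX by simp
  moreover have "\<forall>t<r. (\<Sum>x\<in>X. pt x ^ t * e x tau) = 0"
  proof (intro allI impI)
    fix t assume "t < r"
    then have st: "Suc t \<in> {1..r}" by auto
    have tl: "tau < l" using True by simp
    have h: "\<forall>tau<l. \<forall>t\<in>{1..r}. (\<Sum>i=1..n. lam i (digit sm i tau) ^ (t - 1) * e i tau) = 0"
      using C unfolding inC_def by blast
    have "(\<Sum>j=1..n. lam j (digit sm j tau) ^ (Suc t - 1) * e j tau) = 0"
      using h tl st by blast
    moreover have "(\<Sum>j=1..n. lam j (digit sm j tau) ^ (Suc t - 1) * e j tau)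
       = (\<Sum>x\<in>X. pt x ^ t * e x tau)"
      unfolding X_def pt_def using z
      by (simp, intro sum.mono_neutral_right) auto
    ultimately show "(\<Sum>x\<in>X. pt x ^ t * e x tau) = 0" by simp
  qed
  ultimately have "(\<Sum>x\<in>{x\<in>X. pt x = pt i}. e x tau) = 0"
    by (rule vander_group[OF finX, of pt r "\<lambda>x. e x tau"])
  moreover have "{x\<in>X. pt x = pt i} = {i}"
  proof
    show "{x\<in>X. pt x = pt i} \<subseteq> {i}"
    proof
      fix x assume "x \<in> {x\<in>X. pt x = pt i}"
      then have "x \<in> {1..n}" "lam x (digit sm x tau) = lam i (digit sm i tau)"
        by (auto simp: X_def pt_def)
      then show "x \<in> {i}"
        using lam_inj[OF inj _ _ digit_lt[OF sm] digit_lt[OF sm]] True by auto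
    qed
    show "{i} \<subseteq> {x\<in>X. pt x = pt i}" using True by (auto simp: X_def)
  qed
  ultimately show ?thesis by simp
qed

lemma basis_vec_exists:
  fixes lam :: "nat \<Rightarrow> nat \<Rightarrow> 'a::{field,finite}"
  assumes sm: "0 < sm"
    and inj: "inj_on (\<lambda>(i, j). lam i j) ({1..n} \<times> {0..<sm})"
    and kn: "k \<le> n" and r: "r = n - k"
    and i0: "i0 \<in> {1..k}" and t0: "t0 < l"
  shows "\<exists>c. inC n r sm l lam c \<and> (\<forall>i\<in>{1..k}. c i t0 = (if i = i0 then 1 else 0))
              \<and> (\<forall>i tau. tau \<noteq> t0 \<longrightarrow> c i tau = 0)"
proof -
  define J where "J = {k+1..n}"
  define pt where "pt j = lam j (digit sm j t0)" for j
  have cJ: "card J = r" using r by (simp add: J_def)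
  have injJ: "inj_on pt J"
  proof (rule inj_onI)
    fix x y assume "x \<in> J" "y \<in> J" "pt x = pt y"
    then show "x = y"
      using lam_inj[OF inj, of x y "digit sm x t0" "digit sm y t0"] digit_lt[OF sm]
      by (auto simp: J_def pt_def)
  qed
  obtain w where w: "\<forall>t<r. (\<Sum>j\<in>J. pt j ^ t * w j) = - (pt i0 ^ t)"
    using vander_solve[of J r pt "\<lambda>t. - (pt i0 ^ t)"] cJ injJ by (auto simp: J_def)
  define c where "c i tau = (if tau = t0 \<and> i \<in> {1..n} then (if i = i0 then 1 else if i \<in> J then w i else 0) else 0)" for i tau
  have cK: "\<forall>i\<in>{1..k}. c i t0 = (if i = i0 then 1 else 0)"
    using kn by (auto simp: c_def J_def)
  have "inC n r sm l lam c"
    unfolding inC_def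
  proof (intro conjI allI impI ballI)
    fix i tau assume "i \<notin> {1..n} \<or> l \<le> tau"
    then show "c i tau = 0" using t0 by (auto simp: c_def)
  next
    fix tau t assume tau: "tau < l" and t: "t \<in> {1..r}"
    show "(\<Sum>i=1..n. lam i (digit sm i tau) ^ (t - 1) * c i tau) = 0"
    proof (cases "tau = t0")
      case False then show ?thesis by (simp add: c_def)
    next
      case True
      have un: "{1..n} = {1..k} \<union> J" "{1..k} \<inter> J = {}" using kn by (auto simp: J_def)
      have "(\<Sum>i=1..n. lam i (digit sm i tau) ^ (t - 1) * c i tau)
          = (\<Sum>i\<in>{1..k}. pt i ^ (t - 1) * c i t0) + (\<Sum>i\<in>J. pt i ^ (t - 1) * c i t0)"
        unfolding un(1) using un(2) True by (simp add: sum.union_disjoint J_def pt_def)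
      also have "(\<Sum>i\<in>{1..k}. pt i ^ (t - 1) * c i t0) = pt i0 ^ (t - 1)"
      proof -
        have "(\<Sum>i\<in>{1..k}. pt i ^ (t - 1) * c i t0) = (\<Sum>i\<in>{1..k}. if i = i0 then pt i ^ (t - 1) else 0)"
          using cK by (intro sum.cong) auto
        then show ?thesis using i0 by simp
      qed
      also have "(\<Sum>i\<in>J. pt i ^ (t - 1) * c i t0) = (\<Sum>j\<in>J. pt j ^ (t - 1) * w j)"
        using i0 by (intro sum.cong refl) (auto simp: c_def J_def)
      also have "\<dots> = - (pt i0 ^ (t - 1))" using w t by auto
      finally show ?thesis by simp
    qed
  qed
  moreover note cK
  moreover have "\<forall>i tau. tau \<noteq> t0 \<longrightarrow> c i tau = 0" by (simp add: c_def)
  ultimately show ?thesis by blast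
qed

lemma MDS_part:
  fixes lam :: "nat \<Rightarrow> nat \<Rightarrow> 'a::{field,finite}"
  assumes sm: "0 < sm"
    and inj: "inj_on (\<lambda>(i, j). lam i j) ({1..n} \<times> {0..<sm})"
    and kn: "k \<le> n" and r: "r = n - k"
  shows "is_MDS_array_code n k l {c. inC n r sm l lam c}"
proof -
  interpret V: vector_space "cw_scale :: 'a \<Rightarrow> _" by (rule vs_cw)
  let ?C = "{c. inC n r sm l lam c}"
  have sub: "V.subspace ?C" by (rule subspace_inC)
  have uniq: "c = c'" if K: "K \<subseteq> {1..n}" "card K = k" and c: "c \<in> ?C" "c' \<in> ?C"
    and eq: "\<forall>i\<in>K. c i = c' i" for K c c'
  proof -
    have d: "inC n r sm l lam (c - c')" using c inC_diff by auto
    have "(c - c') i tau = 0" for i tau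
      by (rule inC_uniq[OF d sm inj K r]) (use eq in auto)
    then show ?thesis by (auto simp: fun_eq_iff)
  qed
  define Idx where "Idx = {1..k} \<times> {..<l}"
  define BP where "BP i0 t0 c \<longleftrightarrow> inC n r sm l lam c \<and> (\<forall>i\<in>{1..k}. c i t0 = (if i = i0 then 1 else 0))
              \<and> (\<forall>i tau. tau \<noteq> t0 \<longrightarrow> c i tau = 0)" for i0 t0 and c :: "nat \<Rightarrow> nat \<Rightarrow> 'a"
  define E where "E p = (SOME c. BP (fst p) (snd p) c)" for p
  have EP: "BP (fst p) (snd p) (E p)" if "p \<in> Idx" for p
  proof -
    have "\<exists>c. BP (fst p) (snd p) c" unfolding BP_def
      by (rule basis_vec_exists[OF sm inj kn r]) (use that in \<open>auto simp: Idx_def\<close>)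
    then show ?thesis unfolding E_def by (rule someI_ex)
  qed
  have Eval: "E p i t = (if p = (i, t) then 1 else 0)" if "p \<in> Idx" "(i, t) \<in> Idx" for p i t
    using EP[OF that(1)] that by (cases p; cases "t = snd p") (auto simp: BP_def Idx_def)
  have EC: "E p \<in> ?C" if "p \<in> Idx" for p using EP[OF that] by (simp add: BP_def)
  have injE: "inj_on E Idx"
  proof (rule inj_onI)
    fix p q assume p: "p \<in> Idx" and q: "q \<in> Idx" and e: "E p = E q"
    obtain i t where qq: "q = (i, t)" by (cases q)
    have "E p i t = E q i t" using e by simp
    then show "p = q" using Eval[OF p] Eval[OF q] q qq by (auto split: if_splits)
  qed
  define B where "B = E ` Idx"
  have finIdx: "finite Idx" by (simp add: Idx_def)
  have cardB: "card B = k * l" unfolding B_def using card_image[OF injE] by (simp add: Idx_def)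
  have BC: "B \<subseteq> ?C" using EC by (auto simp: B_def)
  have indep: "V.independent B"
  proof (rule V.independent_if_scalars_zero)
    show "finite B" using finIdx by (simp add: B_def)
  next
    fix f x assume s: "(\<Sum>x\<in>B. cw_scale (f x) x) = 0" and x: "x \<in> B"
    then obtain p0 where p0: "p0 \<in> Idx" "x = E p0" by (auto simp: B_def)
    obtain i0 t0 where pp: "p0 = (i0, t0)" by (cases p0)
    have "(\<Sum>x\<in>B. cw_scale (f x) x) = (\<Sum>p\<in>Idx. cw_scale (f (E p)) (E p))"
      unfolding B_def by (rule sum.reindex[OF injE, unfolded comp_def])
    then have "(\<Sum>p\<in>Idx. cw_scale (f (E p)) (E p)) i0 t0 = 0" using s by simp
    then have "(\<Sum>p\<in>Idx. f (E p) * E p i0 t0) = 0" by (simp add: sum_app2 cw_scale_def)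
    moreover have "(\<Sum>p\<in>Idx. f (E p) * E p i0 t0) = f (E p0)"
    proof -
      have "(\<Sum>p\<in>Idx. f (E p) * E p i0 t0) = (\<Sum>p\<in>Idx. if p = p0 then f (E p) else 0)"
        by (intro sum.cong refl) (use Eval p0 pp in auto)
      then show ?thesis using p0 finIdx by simp
    qed
    ultimately show "f x = 0" using p0 by simp
  qed
  have span: "?C \<subseteq> V.span B"
  proof
    fix c assume c: "c \<in> ?C"
    define c' where "c' = (\<Sum>p\<in>Idx. cw_scale (c (fst p) (snd p)) (E p))"
    have c'span: "c' \<in> V.span B" unfolding c'_def
      by (intro V.span_sum V.span_scale V.span_base) (auto simp: B_def)
    have c'C: "c' \<in> ?C" unfolding c'_def
      by (intro V.subspace_sum[OF sub] V.subspace_scale[OF sub] EC)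
    have "c = c'"
    proof (rule uniq[of "{1..k}"])
      show "\<forall>i\<in>{1..k}. c i = c' i"
      proof (intro ballI ext)
        fix i t assume i: "i \<in> {1..k}"
        have "c' i t = (\<Sum>p\<in>Idx. c (fst p) (snd p) * E p i t)"
          by (simp add: c'_def sum_app2 cw_scale_def)
        also have "\<dots> = c i t"
        proof (cases "t < l")
          case True
          then have "(i, t) \<in> Idx" using i by (simp add: Idx_def)
          have "(\<Sum>p\<in>Idx. c (fst p) (snd p) * E p i t) = (\<Sum>p\<in>Idx. if p = (i, t) then c (fst p) (snd p) else 0)"
            by (intro sum.cong refl) (use Eval \<open>(i, t) \<in> Idx\<close> in auto)
          then show ?thesis using \<open>(i, t) \<in> Idx\<close> finIdx by simp
        next
          case False
          have "E p i t = 0" if "p \<in> Idx" for p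
            using EP[OF that] False that by (auto simp: BP_def Idx_def)
          moreover have "c i t = 0" using c False by (simp add: inC_def)
          ultimately show ?thesis by simp
        qed
        finally show "c i t = c' i t" by simp
      qed
    qed (use kn c c'C in auto)
    then show "c \<in> V.span B" using c'span by simp
  qed
  have dim: "V.dim ?C = k * l" by (rule V.dim_unique[OF BC span indep cardB])
  show ?thesis
    unfolding is_MDS_array_code_def
  proof (intro conjI)
    show "\<forall>c\<in>?C. \<forall>i tau. i \<notin> {1..n} \<or> l \<le> tau \<longrightarrow> c i tau = 0"
    proof (intro ballI allI impI)
      fix c i tau assume "c \<in> ?C" "i \<notin> {1..n} \<or> l \<le> tau"
      then show "c i tau = 0" by (simp add: inC_def)
    qed
    show "module.subspace cw_scale ?C" by (rule sub)
    show "V.dim ?C = k * l" by (rule dim)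
    show "\<forall>K. K \<subseteq> {1..n} \<and> card K = k \<longrightarrow> (\<forall>c\<in>?C. \<forall>c'\<in>?C. (\<forall>i\<in>K. c i = c' i) \<longrightarrow> c = c')"
      using uniq by blast
  qed
qed

lemma mod_shift_inj:
  fixes y a b m :: nat
  assumes "(y + a) mod m = (y + b) mod m" "a < m" "b < m"
  shows "a = b"
proof -
  have "int ((y + a) mod m) = int ((y + b) mod m)" using assms(1) by simp
  then have "(int y + int a) mod int m = (int y + int b) mod int m" by (simp add: zmod_int)
  then have "int a mod int m = int b mod int m" by (metis mod_add_left_eq add_diff_cancel_left' mod_diff_cong)
  then show ?thesis using assms(2,3) by simp
qed

lemma tau_eq:
  fixes a b :: nat
  assumes "a div (P * sm ^ n) = b div (P * sm ^ n)" "a div sm ^ n mod P = b div sm ^ n mod P"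
    "\<forall>i\<in>{1..n}. digit sm i a = digit sm i b"
  shows "a = b"
proof -
  have q: "a div sm ^ n div P = b div sm ^ n div P"
    using assms(1) by (metis div_mult2_eq mult.commute)
  have "a div sm ^ n = b div sm ^ n"
    using q assms(2) by (metis div_mult_mod_eq)
  moreover have "a mod sm ^ n = b mod sm ^ n" using digits_eq_mod assms(3) by blast
  ultimately show ?thesis by (metis div_mult_mod_eq)
qed

lemma block_card:
  fixes \<pi> :: "nat \<Rightarrow> nat"
  assumes "inj_on \<pi> H" "0 < \<delta>"
  shows "card {i\<in>H. \<pi> i div \<delta> = bb} \<le> \<delta>"
proof -
  have "card {i\<in>H. \<pi> i div \<delta> = bb} \<le> card {bb * \<delta>..<bb * \<delta> + \<delta>}"
  proof (rule card_inj_on_le)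
    show "inj_on \<pi> {i\<in>H. \<pi> i div \<delta> = bb}" using assms(1) by (rule inj_on_subset) auto
    show "\<pi> ` {i\<in>H. \<pi> i div \<delta> = bb} \<subseteq> {bb * \<delta>..<bb * \<delta> + \<delta>}"
    proof
      fix x assume "x \<in> \<pi> ` {i\<in>H. \<pi> i div \<delta> = bb}"
      then obtain i where "x = \<pi> i" "\<pi> i div \<delta> = bb" by auto
      then show "x \<in> {bb * \<delta>..<bb * \<delta> + \<delta>}" using assms(2)
        by (metis atLeastLessThan_iff add.commute div_mult_mod_eq le_add1 mod_less_divisor
            nat_add_left_cancel_less mult.commute)
    qed
  qed simp
  then show ?thesis by simp
qed

definition inl :: "nat \<Rightarrow> nat \<Rightarrow> nat \<Rightarrow> nat \<Rightarrow> nat \<Rightarrow> nat set \<Rightarrow> (nat \<Rightarrow> nat) \<Rightarrow> nat \<Rightarrow> nat \<Rightarrow> nat \<Rightarrow> nat \<Rightarrow> bool" where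
  "inl sm n l P p H blk bb g Y tau \<longleftrightarrow> tau < l \<and> tau div (P * sm ^ n) = g \<and>
     ((tau div sm ^ n mod P = p + bb \<and> (\<forall>i\<in>{1..n}. digit sm i tau = digit sm i Y)) \<or>
      (tau div sm ^ n mod P < p \<and> (\<forall>i\<in>{1..n}. digit sm i tau =
          (if i \<in> H \<and> blk i = bb then (digit sm i Y + tau div sm ^ n mod P + 1) mod sm else digit sm i Y))))"

locale rctx =
  fixes n k r sm l :: nat and lam :: "nat \<Rightarrow> nat \<Rightarrow> 'a::{field,finite}"
    and h d \<delta> p q P s2 :: nat and H R :: "nat set" and blk :: "nat \<Rightarrow> nat"
  assumes sm0: "0 < sm"
    and inj: "inj_on (\<lambda>(i, j). lam i j) ({1..n} \<times> {0..<sm})"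
    and r: "r = n - k" and kd: "k \<le> d" and dn: "d \<le> n"
    and \<delta>0: "0 < \<delta>" and dk: "d - k = p * \<delta>" and hq: "h = q * \<delta>" and P: "P = p + q"
    and psm: "p < sm" and q0: "0 < q" and l: "l = P * s2 * sm ^ n"
    and H: "H \<subseteq> {1..n}" and cH: "card H = h"
    and R: "R \<subseteq> {1..n} - H" and cR: "card R = d"
    and blk_lt: "\<forall>i\<in>H. blk i < q"
    and blk_card: "\<forall>bb. card {i\<in>H. blk i = bb} \<le> \<delta>"
begin

abbreviation "IL \<equiv> inl sm n l P p H blk"

definition jj :: "nat \<Rightarrow> nat" where
  "jj tau = (if tau div sm ^ n mod P < p then tau div sm ^ n mod P + 1 else 0)"

lemma jj_le: "jj tau \<le> p"
  by (auto simp: jj_def)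

lemma inl_digit_out:
  assumes "IL bb g Y tau" "i \<in> {1..n}" "\<not> (i \<in> H \<and> blk i = bb)"
  shows "digit sm i tau = digit sm i Y"
  using assms unfolding inl_def by auto

lemma inl_digit_in:
  assumes "IL bb g Y tau" "i \<in> {1..n}" "i \<in> H" "blk i = bb"
  shows "digit sm i tau = (digit sm i Y + jj tau) mod sm"
proof -
  have dY: "digit sm i Y < sm" by (rule digit_lt[OF sm0])
  show ?thesis
  proof (cases "tau div sm ^ n mod P < p")
    case True
    then show ?thesis using assms by (auto simp: inl_def jj_def)
  next
    case False
    then have "digit sm i tau = digit sm i Y" using assms by (auto simp: inl_def)
    then show ?thesis using False dY by (simp add: jj_def)
  qed
qed

lemma inl_eq:
  assumes "IL bb g Y t1" "IL bb g Y t2" "jj t1 = jj t2"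
  shows "t1 = t2"
proof -
  have split1: "t1 div sm ^ n mod P = p + bb \<longleftrightarrow> jj t1 = 0"
    using assms(1) by (auto simp: inl_def jj_def)
  have split2: "t2 div sm ^ n mod P = p + bb \<longleftrightarrow> jj t2 = 0"
    using assms(2) by (auto simp: inl_def jj_def)
  have rho: "t1 div sm ^ n mod P = t2 div sm ^ n mod P"
  proof (cases "jj t1 = 0")
    case True
    then show ?thesis using split1 split2 assms(3) by simp
  next
    case False
    then have "t1 div sm ^ n mod P < p" "t2 div sm ^ n mod P < p"
      using assms(3) by (auto simp: jj_def split: if_splits)
    then show ?thesis using assms(3) by (simp add: jj_def)
  qed
  have g: "t1 div (P * sm ^ n) = t2 div (P * sm ^ n)" using assms(1,2) by (simp add: inl_def)
  have "\<forall>i\<in>{1..n}. digit sm i t1 = digit sm i t2"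
  proof
    fix i assume i: "i \<in> {1..n}"
    show "digit sm i t1 = digit sm i t2"
    proof (cases "i \<in> H \<and> blk i = bb")
      case True
      then show ?thesis using inl_digit_in[OF assms(1) i] inl_digit_in[OF assms(2) i] assms(3) by simp
    next
      case False
      then show ?thesis using inl_digit_out[OF assms(1) i] inl_digit_out[OF assms(2) i] by simp
    qed
  qed
  then show ?thesis using tau_eq[OF g rho] by simp
qed

lemma inl_inj:
  assumes "IL bb g Y t1" "IL bb g Y t2" "i \<in> {1..n}" "i \<in> H" "blk i = bb"
    "digit sm i t1 = digit sm i t2"
  shows "t1 = t2"
proof -
  have "(digit sm i Y + jj t1) mod sm = (digit sm i Y + jj t2) mod sm"
    using inl_digit_in[OF assms(1,3,4,5)] inl_digit_in[OF assms(2,3,4,5)] assms(6) by simp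
  then have "jj t1 = jj t2"
    by (rule mod_shift_inj) (use jj_le[of t1] jj_le[of t2] psm in auto)
  then show ?thesis by (rule inl_eq[OF assms(1,2)])
qed

end

context rctx begin

lemma line:
  fixes e :: "nat \<Rightarrow> nat \<Rightarrow> 'a"
  assumes eC: "inC n r sm l lam e"
    and hz: "\<forall>j\<in>R. (\<Sum>tau\<in>{tau\<in>{..<l}. IL bb g Y tau}. e j tau) = 0"
  shows "\<forall>i\<in>H. blk i = bb \<longrightarrow> (\<forall>tau. IL bb g Y tau \<longrightarrow> e i tau = 0)"
    and "\<forall>i\<in>H. blk i \<noteq> bb \<longrightarrow> (\<Sum>tau\<in>{tau\<in>{..<l}. IL bb g Y tau}. e i tau) = 0"
proof -
  define L where "L = {tau\<in>{..<l}. IL bb g Y tau}"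
  define A where "A = {1..n} - R"
  define X where "X = A \<times> L"
  define pt where "pt x = lam (fst x) (digit sm (fst x) (snd x))" for x
  define w where "w x = e (fst x) (snd x)" for x
  have finL: "finite L" by (simp add: L_def)
  have finA: "finite A" by (simp add: A_def)
  have finX: "finite X" using finL finA by (simp add: X_def)
  have RH: "R \<inter> H = {}" using R by auto
  have Rn: "R \<subseteq> {1..n}" using R by auto
  have eq: "\<forall>t<r. (\<Sum>x\<in>X. pt x ^ t * w x) = 0"
  proof (intro allI impI)
    fix t assume t: "t < r"
    define F where "F i tau = lam i (digit sm i tau) ^ t * e i tau" for i tau
    have par: "(\<Sum>i=1..n. F i tau) = 0" if "tau \<in> L" for tau
    proof -
      have h: "\<forall>tau<l. \<forall>t\<in>{1..r}. (\<Sum>i=1..n. lam i (digit sm i tau) ^ (t - 1) * e i tau) = 0"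
        using eC unfolding inC_def by blast
      have "tau < l" using that by (simp add: L_def)
      moreover have "Suc t \<in> {1..r}" using t by simp
      ultimately have "(\<Sum>i=1..n. lam i (digit sm i tau) ^ (Suc t - 1) * e i tau) = 0"
        using h by blast
      then show ?thesis by (simp add: F_def)
    qed
    have "0 = (\<Sum>tau\<in>L. \<Sum>i=1..n. F i tau)" using par by simp
    also have "\<dots> = (\<Sum>i=1..n. \<Sum>tau\<in>L. F i tau)" by (rule sum.swap)
    also have "\<dots> = (\<Sum>i\<in>A. \<Sum>tau\<in>L. F i tau) + (\<Sum>i\<in>R. \<Sum>tau\<in>L. F i tau)"
      unfolding A_def by (rule sum.subset_diff[OF Rn]) simp
    also have "(\<Sum>i\<in>R. \<Sum>tau\<in>L. F i tau) = 0"
    proof (rule sum.neutral, rule ballI)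
      fix i assume i: "i \<in> R"
      have "i \<in> {1..n}" "i \<notin> H" using i R by auto
      then have "(\<Sum>tau\<in>L. F i tau) = (\<Sum>tau\<in>L. lam i (digit sm i Y) ^ t * e i tau)"
        by (intro sum.cong refl) (auto simp: F_def L_def dest: inl_digit_out)
      also have "\<dots> = lam i (digit sm i Y) ^ t * (\<Sum>tau\<in>L. e i tau)"
        by (simp add: sum_distrib_left)
      also have "(\<Sum>tau\<in>L. e i tau) = 0" using hz i by (simp add: L_def)
      finally show "(\<Sum>tau\<in>L. F i tau) = 0" by simp
    qed
    also have "(\<Sum>i\<in>A. \<Sum>tau\<in>L. F i tau) = (\<Sum>x\<in>X. pt x ^ t * w x)"
      unfolding X_def by (subst sum.cartesian_product) (simp add: F_def pt_def w_def case_prod_beta)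
    finally show "(\<Sum>x\<in>X. pt x ^ t * w x) = 0" by simp
  qed
  define Bk where "Bk = {i\<in>H. blk i = bb}"
  define Dg where "Dg i = (if i \<in> Bk then (\<lambda>j. (digit sm i Y + j) mod sm) ` {..p} else {digit sm i Y})" for i
  have sub: "pt ` X \<subseteq> (\<Union>i\<in>A. (\<lambda>u. lam i u) ` Dg i)"
  proof
    fix z assume "z \<in> pt ` X"
    then obtain i tau where it: "i \<in> A" "tau \<in> L" "z = lam i (digit sm i tau)"
      by (auto simp: X_def pt_def)
    have iL: "IL bb g Y tau" and "i \<in> {1..n}" using it by (auto simp: L_def A_def)
    have "digit sm i tau \<in> Dg i"
    proof (cases "i \<in> Bk")
      case True
      then have "digit sm i tau = (digit sm i Y + jj tau) mod sm"
        using inl_digit_in[OF iL \<open>i \<in> {1..n}\<close>] by (auto simp: Bk_def)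
      then show ?thesis using True jj_le[of tau] by (auto simp: Dg_def)
    next
      case False
      then show ?thesis using inl_digit_out[OF iL \<open>i \<in> {1..n}\<close>] by (auto simp: Dg_def Bk_def)
    qed
    then show "z \<in> (\<Union>i\<in>A. (\<lambda>u. lam i u) ` Dg i)" using it by auto
  qed
  have "card (pt ` X) \<le> card (\<Union>i\<in>A. (\<lambda>u. lam i u) ` Dg i)"
    by (rule card_mono[OF _ sub]) (auto simp: finA Dg_def)
  also have "\<dots> \<le> (\<Sum>i\<in>A. card ((\<lambda>u. lam i u) ` Dg i))" by (rule card_UN_le[OF finA])
  also have "\<dots> \<le> (\<Sum>i\<in>A. (if i \<in> Bk then p + 1 else 1))"
  proof (rule sum_mono)
    fix i assume "i \<in> A"
    have "card ((\<lambda>u. lam i u) ` Dg i) \<le> card (Dg i)" by (rule card_image_le) (simp add: Dg_def)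
    also have "\<dots> \<le> (if i \<in> Bk then p + 1 else 1)"
      using card_image_le[of "{..p}" "\<lambda>j. (digit sm i Y + j) mod sm"] by (auto simp: Dg_def)
    finally show "card ((\<lambda>u. lam i u) ` Dg i) \<le> (if i \<in> Bk then p + 1 else 1)" .
  qed
  also have "\<dots> = (\<Sum>i\<in>A. 1 + (if i \<in> Bk then p else 0))" by (intro sum.cong) auto
  also have "\<dots> = card A + p * card (A \<inter> Bk)"
  proof -
    have "(\<Sum>i\<in>A. 1 + (if i \<in> Bk then p else 0)) = (\<Sum>i\<in>A. (1::nat)) + (\<Sum>i\<in>A. if i \<in> Bk then p else 0)"
      by (rule sum.distrib)
    also have "(\<Sum>i\<in>A. if i \<in> Bk then p else 0) = (\<Sum>i\<in>A \<inter> Bk. p)"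
      using finA by (rule sum.inter_restrict[symmetric])
    finally show ?thesis by simp
  qed
  also have "\<dots> \<le> (n - d) + p * \<delta>"
  proof -
    have "card A = n - d" using Rn cR by (simp add: A_def card_Diff_subset finite_subset)
    moreover have "card (A \<inter> Bk) \<le> \<delta>"
    proof -
      have "card (A \<inter> Bk) \<le> card Bk"
      proof (rule card_mono)
        have "finite H" using H finite_subset by blast
        then show "finite Bk" by (simp add: Bk_def)
      qed auto
      also have "card Bk \<le> \<delta>" using blk_card by (simp add: Bk_def)
      finally show ?thesis .
    qed
    ultimately show ?thesis by simp
  qed
  also have "\<dots> = r" using dk r kd dn by simp
  finally have cardX: "card (pt ` X) \<le> r" .
  have vg: "(\<Sum>x\<in>{x\<in>X. pt x = z}. w x) = 0" for z
    by (rule vander_group[OF finX cardX eq])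
  show "\<forall>i\<in>H. blk i = bb \<longrightarrow> (\<forall>tau. IL bb g Y tau \<longrightarrow> e i tau = 0)"
  proof (intro ballI impI allI)
    fix i tau assume i: "i \<in> H" and b: "blk i = bb" and iL: "IL bb g Y tau"
    have iA: "i \<in> A" "i \<in> {1..n}" using i H RH by (auto simp: A_def)
    have tL: "tau \<in> L" using iL by (simp add: L_def inl_def)
    have "{x\<in>X. pt x = pt (i, tau)} = {(i, tau)}"
    proof
      show "{x\<in>X. pt x = pt (i, tau)} \<subseteq> {(i, tau)}"
      proof
        fix x assume x: "x \<in> {x\<in>X. pt x = pt (i, tau)}"
        obtain i' tau' where xx: "x = (i', tau')" by (cases x)
        have i'n: "i' \<in> {1..n}" and t'L: "IL bb g Y tau'" using x xx by (auto simp: X_def A_def L_def)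
        have "lam i' (digit sm i' tau') = lam i (digit sm i tau)" using x xx by (simp add: pt_def)
        then have "i' = i \<and> digit sm i' tau' = digit sm i tau"
          by (rule lam_inj[OF inj i'n iA(2) digit_lt[OF sm0] digit_lt[OF sm0]])
        then have "i' = i" "tau' = tau"
          using inl_inj[OF t'L iL iA(2) i b] by auto
        then show "x \<in> {(i, tau)}" using xx by simp
      qed
      show "{(i, tau)} \<subseteq> {x\<in>X. pt x = pt (i, tau)}" using iA tL by (simp add: X_def)
    qed
    then show "e i tau = 0" using vg[of "pt (i, tau)"] by (simp add: w_def)
  qed
  show "\<forall>i\<in>H. blk i \<noteq> bb \<longrightarrow> (\<Sum>tau\<in>{tau\<in>{..<l}. IL bb g Y tau}. e i tau) = 0"
  proof (intro ballI impI)
    fix i assume i: "i \<in> H" and b: "blk i \<noteq> bb"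
    have iA: "i \<in> A" "i \<in> {1..n}" using i H RH by (auto simp: A_def)
    have "{x\<in>X. pt x = lam i (digit sm i Y)} = {i} \<times> L"
    proof
      show "{x\<in>X. pt x = lam i (digit sm i Y)} \<subseteq> {i} \<times> L"
      proof
        fix x assume x: "x \<in> {x\<in>X. pt x = lam i (digit sm i Y)}"
        obtain i' tau' where xx: "x = (i', tau')" by (cases x)
        have i'n: "i' \<in> {1..n}" and t'L: "tau' \<in> L" using x xx by (auto simp: X_def A_def)
        have "lam i' (digit sm i' tau') = lam i (digit sm i Y)" using x xx by (simp add: pt_def)
        then have "i' = i \<and> digit sm i' tau' = digit sm i Y"
          by (rule lam_inj[OF inj i'n iA(2) digit_lt[OF sm0] digit_lt[OF sm0]])
        then show "x \<in> {i} \<times> L" using xx t'L by simp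
      qed
      show "{i} \<times> L \<subseteq> {x\<in>X. pt x = lam i (digit sm i Y)}"
      proof
        fix x assume x: "x \<in> {i} \<times> L"
        then obtain tau where xx: "x = (i, tau)" "tau \<in> L" by auto
        then have "IL bb g Y tau" by (simp add: L_def)
        then have "digit sm i tau = digit sm i Y" using inl_digit_out[OF _ iA(2)] b by blast
        then show "x \<in> {x\<in>X. pt x = lam i (digit sm i Y)}" using xx iA by (simp add: X_def pt_def)
      qed
    qed
    then have "(\<Sum>x\<in>{i} \<times> L. w x) = 0" using vg[of "lam i (digit sm i Y)"] by simp
    moreover have "{i} \<times> L = (\<lambda>tau. (i, tau)) ` L" by auto
    moreover have "(\<Sum>x\<in>(\<lambda>tau. (i, tau)) ` L. w x) = (\<Sum>tau\<in>L. w (i, tau))"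
      by (rule sum.reindex_cong[of "\<lambda>tau. (i, tau)"]) (auto simp: inj_on_def)
    ultimately show "(\<Sum>tau\<in>{tau\<in>{..<l}. IL bb g Y tau}. e i tau) = 0"
      by (simp add: w_def L_def)
  qed
qed

end

context rctx begin

lemma peel:
  fixes e :: "nat \<Rightarrow> nat \<Rightarrow> 'a"
  assumes eC: "inC n r sm l lam e"
    and hz: "\<forall>bb<q. \<forall>g<s2. \<forall>Y<sm ^ n. \<forall>j\<in>R. (\<Sum>tau\<in>{tau\<in>{..<l}. IL bb g Y tau}. e j tau) = 0"
    and i: "i \<in> H"
  shows "e i tau = 0"
proof -
  define N where "N = sm ^ n"
  have N0: "0 < N" using sm0 by (simp add: N_def)
  have P0: "0 < P" using P q0 by simp
  have lA: "\<And>bb g Y i tau. bb < q \<Longrightarrow> g < s2 \<Longrightarrow> Y < sm ^ n \<Longrightarrow> i \<in> H \<Longrightarrow> blk i = bb \<Longrightarrow> IL bb g Y tau \<Longrightarrow> e i tau = 0"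
    using line(1)[OF eC] hz by blast
  have lB: "\<And>bb g Y i. bb < q \<Longrightarrow> g < s2 \<Longrightarrow> Y < sm ^ n \<Longrightarrow> i \<in> H \<Longrightarrow> blk i \<noteq> bb \<Longrightarrow>
      (\<Sum>tau\<in>{tau\<in>{..<l}. IL bb g Y tau}. e i tau) = 0"
    using line(2)[OF eC] hz by blast
  have gl: "tau div (P * N) < s2" if "tau < l" for tau
    using that l by (intro less_mult_imp_div_less) (simp add: N_def mult.commute mult.left_commute)
  have full: "e i tau = 0" if i: "i \<in> H" and t: "tau < l" and rho: "tau div N mod P < p" for i tau
  proof -
    define bb0 where "bb0 = blk i"
    define g where "g = tau div (P * N)"
    define \<rho> where "\<rho> = tau div N mod P"
    define dg where "dg i' = (if i' \<in> H \<and> blk i' = bb0 then (digit sm i' tau + (sm - (\<rho> + 1))) mod sm else digit sm i' tau)" for i'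
    have "\<forall>i'\<in>{1..n}. dg i' < sm" using sm0 by (auto simp: dg_def digit_lt)
    then obtain Y where Y: "Y < sm ^ n" "\<forall>i'\<in>{1..n}. digit sm i' Y = dg i'"
      using digit_exists[OF sm0] by blast
    have rp: "\<rho> + 1 \<le> sm" using rho psm by (simp add: \<rho>_def)
    have "IL bb0 g Y tau"
      unfolding inl_def
    proof (intro conjI disjI2)
      show "tau < l" by (rule t)
      show "tau div (P * sm ^ n) = g" by (simp add: g_def N_def)
      show "tau div sm ^ n mod P < p" using rho by (simp add: N_def)
      show "\<forall>i'\<in>{1..n}. digit sm i' tau = (if i' \<in> H \<and> blk i' = bb0
              then (digit sm i' Y + tau div sm ^ n mod P + 1) mod sm else digit sm i' Y)"
      proof
        fix i' assume i': "i' \<in> {1..n}"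
        show "digit sm i' tau = (if i' \<in> H \<and> blk i' = bb0
              then (digit sm i' Y + tau div sm ^ n mod P + 1) mod sm else digit sm i' Y)"
        proof (cases "i' \<in> H \<and> blk i' = bb0")
          case True
          have x: "digit sm i' tau < sm" by (rule digit_lt[OF sm0])
          have "(digit sm i' Y + tau div sm ^ n mod P + 1) mod sm
              = ((digit sm i' tau + (sm - (\<rho> + 1))) mod sm + (\<rho> + 1)) mod sm"
            using Y i' True by (simp add: dg_def \<rho>_def N_def add.assoc)
          also have "\<dots> = (digit sm i' tau + (sm - (\<rho> + 1)) + (\<rho> + 1)) mod sm"
            by (rule mod_add_left_eq)
          also have "\<dots> = (digit sm i' tau + sm) mod sm" using rp by simp
          also have "\<dots> = digit sm i' tau" using x by simp
          finally show ?thesis using True by simp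
        next
          case False
          have "digit sm i' Y = dg i'" using Y(2) i' by blast
          then have "digit sm i' Y = digit sm i' tau" using False by (simp add: dg_def)
          then show ?thesis using False by (simp only: if_False)
        qed
      qed
    qed
    moreover have "bb0 < q" using blk_lt i by (simp add: bb0_def)
    moreover have "g < s2" using gl[OF t] by (simp add: g_def)
    ultimately show ?thesis using lA Y(1) i by (simp add: bb0_def)
  qed
  show ?thesis
  proof (cases "tau < l")
    case False
    then show ?thesis using eC by (simp add: inC_def)
  next
    case t: True
    define \<rho> where "\<rho> = tau div N mod P"
    define g where "g = tau div (P * N)"
    define Y where "Y = tau mod N"
    have YN: "Y < sm ^ n" using N0 by (simp add: Y_def N_def)
    have gs: "g < s2" using gl[OF t] by (simp add: g_def)
    have dY: "\<forall>i'\<in>{1..n}. digit sm i' tau = digit sm i' Y"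
      by (simp add: Y_def N_def digit_mod)
    have rP: "\<rho> < P" using P0 by (simp add: \<rho>_def)
    show ?thesis
    proof (cases "\<rho> < p")
      case True
      then show ?thesis using full[OF i t] by (simp add: \<rho>_def)
    next
      case False
      define bb' where "bb' = \<rho> - p"
      have rho: "\<rho> = p + bb'" using False by (simp add: bb'_def)
      have bq: "bb' < q" using rP P rho by simp
      have tin: "IL bb' g Y tau"
        using t dY rho by (simp add: inl_def g_def \<rho>_def N_def)
      show ?thesis
      proof (cases "blk i = bb'")
        case True
        show ?thesis using lA[OF bq gs YN i True tin] by this
      next
        case False
        define L where "L = {tau\<in>{..<l}. IL bb' g Y tau}"
        have finL: "finite L" by (simp add: L_def)
        have tL: "tau \<in> L" using tin t by (simp add: L_def)
        have "(\<Sum>tau\<in>L. e i tau) = 0" using lB[OF bq gs YN i False] by (simp add: L_def)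
        moreover have "(\<Sum>tau\<in>L. e i tau) = e i tau + (\<Sum>tau\<in>L - {tau}. e i tau)"
          using finL tL by (rule sum.remove)
        moreover have "(\<Sum>tau\<in>L - {tau}. e i tau) = 0"
        proof (rule sum.neutral, rule ballI)
          fix t' assume t': "t' \<in> L - {tau}"
          then have t'in: "IL bb' g Y t'" and t'l: "t' < l" by (auto simp: L_def)
          show "e i t' = 0"
          proof (cases "t' div N mod P < p")
            case True
            then show ?thesis using full[OF i t'l] by simp
          next
            case False
            then have "jj t' = 0" by (simp add: jj_def N_def)
            moreover have "jj tau = 0" using \<open>\<not> \<rho> < p\<close> by (simp add: jj_def \<rho>_def N_def)
            ultimately have "t' = tau" using inl_eq[OF t'in tin] by simp
            then show ?thesis using t' by simp
          qed
        qed
        ultimately show ?thesis by simp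
      qed
    qed
  qed
qed

end

lemma repair_part:
  fixes lam :: "nat \<Rightarrow> nat \<Rightarrow> 'a::{field,finite}"
  assumes sm0: "0 < sm"
    and inj: "inj_on (\<lambda>(i, j). lam i j) ({1..n} \<times> {0..<sm})"
    and r: "r = n - k"
    and h1: "1 \<le> h" and kd: "k \<le> d" and dnh: "d \<le> n - h"
    and smge: "(d - k + gcd h (d - k)) div gcd h (d - k) \<le> sm"
    and sdvd: "(d - k + h) div gcd h (d - k) dvd s"
    and l: "l = s * sm ^ n"
  shows "has_optimal_repair n k l {c. inC n r sm l lam c} h d"
proof -
  define \<delta> where "\<delta> = gcd h (d - k)"
  have \<delta>0: "0 < \<delta>" using h1 by (simp add: \<delta>_def)
  define p where "p = (d - k) div \<delta>"
  define q where "q = h div \<delta>"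
  have dk: "d - k = p * \<delta>" by (simp add: p_def \<delta>_def)
  have hq: "h = q * \<delta>" by (simp add: q_def \<delta>_def)
  define P where "P = p + q"
  have PP: "(d - k + h) div \<delta> = P" using dk hq \<delta>0 by (simp add: P_def flip: distrib_right)
  have "(d - k + \<delta>) div \<delta> = p + 1" using dk \<delta>0 by simp
  then have psm: "p < sm" using smge by (simp add: \<delta>_def)
  obtain s2 where s2: "s = P * s2" using sdvd PP by (auto simp: \<delta>_def)
  define N where "N = sm ^ n"
  have l': "l = P * s2 * sm ^ n" using l s2 by simp
  have q0: "0 < q" using hq h1 by (cases q) auto
  define \<beta> where "\<beta> = q * s2 * N"
  have hl: "h * l = (d - k + h) * \<beta>"
    using dk hq by (simp add: l' \<beta>_def N_def P_def algebra_simps)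
  have Dpos: "0 < d - k + h" using h1 by simp
  have \<beta>eq: "h * l div (d - k + h) = \<beta>" using hl Dpos by simp
  have dn: "d \<le> n" using dnh by simp
  show ?thesis
    unfolding has_optimal_repair_def
  proof (intro conjI allI impI)
    show "(d - k + h) dvd (h * l)" using hl by simp
  next
    fix H R assume HR: "H \<subseteq> {1..n} \<and> card H = h \<and> R \<subseteq> {1..n} - H \<and> card R = d"
    have finH: "finite H" using HR finite_subset by blast
    obtain \<pi> where \<pi>: "bij_betw \<pi> H {0..<card H}" using ex_bij_betw_finite_nat[OF finH] by blast
    define blk where "blk i = \<pi> i div \<delta>" for i
    have blk_lt: "\<forall>i\<in>H. blk i < q"
    proof
      fix i assume "i \<in> H"
      then have "\<pi> i < q * \<delta>" using \<pi> HR hq by (auto simp: bij_betw_def)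
      then show "blk i < q" using \<delta>0 by (simp add: blk_def less_mult_imp_div_less)
    qed
    have blk_card: "\<forall>bb. card {i\<in>H. blk i = bb} \<le> \<delta>"
      using block_card[of \<pi> H \<delta>] \<pi> \<delta>0 by (simp add: bij_betw_def blk_def)
    interpret rctx n k r sm l lam h d \<delta> p q P s2 H R blk
      by unfold_locales (use sm0 inj r kd dn \<delta>0 dk hq psm q0 l' HR blk_lt blk_card in \<open>auto simp: P_def\<close>)
    define F where "F v = map (\<lambda>\<kappa>. \<Sum>tau\<in>{tau\<in>{..<l}. inl sm n l P p H blk (\<kappa> div (s2 * N)) (\<kappa> div N mod s2) (\<kappa> mod N) tau}. v tau) [0..<\<beta>]" for v :: "nat \<Rightarrow> 'a"
    show "\<exists>f :: nat \<Rightarrow> (nat \<Rightarrow> 'a) \<Rightarrow> 'a list.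
            (\<forall>j\<in>R. \<forall>v. length (f j v) = h * l div (d - k + h)) \<and>
            (\<forall>c\<in>{c. inC n r sm l lam c}. \<forall>c'\<in>{c. inC n r sm l lam c}.
               (\<forall>j\<in>R. f j (c j) = f j (c' j)) \<longrightarrow> (\<forall>i\<in>H. c i = c' i))"
    proof (rule exI[of _ "\<lambda>j. F"], intro conjI ballI impI allI)
      fix j v show "length (F v) = h * l div (d - k + h)" by (simp add: F_def \<beta>eq)
    next
      fix c c' i
      assume c: "c \<in> {c. inC n r sm l lam c}" and c': "c' \<in> {c. inC n r sm l lam c}"
        and fe: "\<forall>j\<in>R. F (c j) = F (c' j)" and i: "i \<in> H"
      define e where "e = c - c'"
      have eC: "inC n r sm l lam e" using c c' inC_diff by (simp add: e_def)
      have ev: "e j tau = c j tau - c' j tau" for j tau by (simp add: e_def)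
      have hz: "\<forall>bb<q. \<forall>g<s2. \<forall>Y<sm ^ n. \<forall>j\<in>R. (\<Sum>tau\<in>{tau\<in>{..<l}. IL bb g Y tau}. e j tau) = 0"
      proof (intro allI impI ballI)
        fix bb g Y j assume bb: "bb < q" and g: "g < s2" and Y: "Y < sm ^ n" and j: "j \<in> R"
        define \<kappa> where "\<kappa> = (bb * s2 + g) * N + Y"
        have YN: "Y < N" using Y by (simp add: N_def)
        have d1: "\<kappa> div N = bb * s2 + g" using YN by (simp add: \<kappa>_def)
        have m1: "\<kappa> mod N = Y" using YN by (simp add: \<kappa>_def)
        have d2: "\<kappa> div (s2 * N) = bb" using d1 g by (simp add: div_mult2_eq mult.commute)
        have m2: "\<kappa> div N mod s2 = g" using d1 g by simp
        have "bb * s2 + g + 1 \<le> q * s2"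
        proof -
          have "bb * s2 + g + 1 \<le> bb * s2 + s2" using g by simp
          also have "\<dots> = (bb + 1) * s2" by simp
          also have "\<dots> \<le> q * s2" using bb by (intro mult_le_mono1) simp
          finally show ?thesis .
        qed
        then have "(bb * s2 + g) * N + Y < q * s2 * N"
        proof -
          assume a: "bb * s2 + g + 1 \<le> q * s2"
          have "(bb * s2 + g) * N + Y < (bb * s2 + g) * N + N" using YN by simp
          also have "\<dots> = (bb * s2 + g + 1) * N" by simp
          also have "\<dots> \<le> q * s2 * N" using a by (intro mult_le_mono1)
          finally show ?thesis .
        qed
        then have kb: "\<kappa> < \<beta>" by (simp add: \<kappa>_def \<beta>_def)
        have "F (c j) ! \<kappa> = F (c' j) ! \<kappa>" using fe j by simp
        then have "(\<Sum>tau\<in>{tau\<in>{..<l}. IL bb g Y tau}. c j tau) = (\<Sum>tau\<in>{tau\<in>{..<l}. IL bb g Y tau}. c' j tau)"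
          using kb by (simp add: F_def d2 m2 m1)
        then show "(\<Sum>tau\<in>{tau\<in>{..<l}. IL bb g Y tau}. e j tau) = 0"
          by (simp add: ev sum_subtractf)
      qed
      show "c i = c' i"
      proof
        fix tau
        have "e i tau = 0" by (rule peel[OF eC hz i])
        then show "c i tau = c' i tau" by (simp add: ev)
      qed
    qed
  qed
qed

theorem theorem5:
  fixes n k m :: nat and h d :: "nat \<Rightarrow> nat"
    and lam :: "nat \<Rightarrow> nat \<Rightarrow> 'a::{field,finite}"
  assumes "1 \<le> k" and "k < n" and "1 \<le> m"
    and "\<forall>i\<in>{1..m}. 1 \<le> h i \<and> h i \<le> n - k"
    and "\<forall>i\<in>{1..m}. k \<le> d i \<and> d i \<le> n - h i"
    and "\<forall>i\<in>{1..m}. \<forall>j\<in>{1..m}. i \<le> j \<longrightarrow>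
           (d i - k + gcd (h i) (d i - k)) div gcd (h i) (d i - k)
             \<le> (d j - k + gcd (h j) (d j - k)) div gcd (h j) (d j - k)"
    and "sm = (d m - k + gcd (h m) (d m - k)) div gcd (h m) (d m - k)"
    and "s = Lcm ((\<lambda>i. (d i - k + h i) div gcd (h i) (d i - k)) ` {1..m})"
    and "l = s * sm ^ n"
    and "r = n - k"
    and "sm * n \<le> CARD('a)"
    and "inj_on (\<lambda>(i, j). lam i j) ({1..n} \<times> {0..<sm})"
    and "C4 = {c :: nat \<Rightarrow> nat \<Rightarrow> 'a.
                (\<forall>i tau. (i \<notin> {1..n} \<or> l \<le> tau) \<longrightarrow> c i tau = 0) \<and>
                (\<forall>tau<l. \<forall>t\<in>{1..r}.
                   (\<Sum>i=1..n. lam i (digit sm i tau) ^ (t - 1) * c i tau) = 0)}"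
  shows "is_MDS_array_code n k l C4 \<and> (\<forall>i\<in>{1..m}. has_optimal_repair n k l C4 (h i) (d i))"
proof -
  note A = assms
  have C4: "C4 = {c. inC n r sm l lam c}" using A(13) by (simp add: inC_def)
  have mm: "m \<in> {1..m}" using A(3) by simp
  have hm: "1 \<le> h m" using A(4) mm by blast
  define g where "g = gcd (h m) (d m - k)"
  have g0: "0 < g" using hm by (simp add: g_def)
  have "sm = (d m - k + g) div g" using A(7) by (simp add: g_def)
  also have "\<dots> = (d m - k) div g + 1" using g0 by simp
  finally have sm0: "0 < sm" by simp
  have mds: "is_MDS_array_code n k l C4"
    unfolding C4 by (rule MDS_part[OF sm0 A(12)]) (use A(2) A(10) in auto)
  have rep: "has_optimal_repair n k l C4 (h i) (d i)" if i: "i \<in> {1..m}" for i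
    unfolding C4
  proof (rule repair_part[OF sm0 A(12) A(10)])
    show "1 \<le> h i" using A(4) i by blast
    show "k \<le> d i" using A(5) i by blast
    show "d i \<le> n - h i" using A(5) i by blast
    show "(d i - k + gcd (h i) (d i - k)) div gcd (h i) (d i - k) \<le> sm"
      using A(6) i mm A(7) by auto
    show "(d i - k + h i) div gcd (h i) (d i - k) dvd s"
      unfolding A(8) by (rule dvd_Lcm) (use i in auto)
    show "l = s * sm ^ n" by (rule A(9))
  qed
  show ?thesis using mds rep by blast
qed

end
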